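(* Let $n\ge 2$, $k\ge 1$, and let $f_i(x)=\frac12 a_ix^2-b_ix$ ($i=1,\dots,n$) be univariate functions satisfying Assumption (B) with parameters $\lambda,L,G$, where $F(x)=\frac1n\sum_{i=1}^n f_i(x)=\frac{\lambda}{2}x^2-bx$. Assume $\frac{L}{\lambda}\le\frac{k}{2\log(nk)}$. Then SGD with random reshuffling, run for $k$ epochs from an arbitrary $x_0\in\mathbb{R}$ with constant step size $\eta=\frac{\log(nk)}{\lambda nk}$, satisfies \[ \mathbb{E}\Big[F(x_k)-\inf_xF(x)\Big]\;\le\;\tilde{O}\left(\frac{\lambda}{n^2k^2}(x_0-x^* )^2+\frac{G^2L^2}{\lambda^3}\left(\frac{1}{n^2k^2}+\frac{1}{nk^3}\right)\right), \] where $x^*=\arg\min_x F(x)$, the expectation is over the $k$ independent uniformly random permutations, and $\tilde O(\cdot)$ hides a universal multiplicative constant and factors polylogarithmic in $n$ and $k$.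
   Context: Assumption (B) (parameters $\lambda,L,G>0$): $F(x)=\frac1n\sum_{i=1}^nf_i(x)$ is $\lambda$-strongly convex on $\mathbb{R}$; each $f_i(x)=\frac{a_i}{2}x^2-b_ix$ is convex (i.e. $a_i\ge 0$), has $L$-Lipschitz derivative (i.e. $a_i\le L$), and satisfies $|f_i'(x^* )|\le G$ where $x^*=\arg\min_xF(x)$. SGD with random reshuffling: for each of $k$ epochs, a fresh uniformly random permutation $\sigma_t$ of $\{1,\dots,n\}$ (independent across epochs) is drawn and the updates $x\leftarrow x-\eta f_{\sigma_t(j)}'(x)$ are performed for $j=1,\dots,n$ in order; $x_t$ is the iterate at the end of epoch $t$. *)

theory Defs
  imports "HOL-Probability.Probability" "HOL-Combinatorics.Multiset_Permutations"
begin

definition fcomp :: "(nat \<Rightarrow> real) \<Rightarrow> (nat \<Rightarrow> real) \<Rightarrow> nat \<Rightarrow> real \<Rightarrow> real" where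
  "fcomp a b i x = a i / 2 * x ^ 2 - b i * x"

definition fcomp' :: "(nat \<Rightarrow> real) \<Rightarrow> (nat \<Rightarrow> real) \<Rightarrow> nat \<Rightarrow> real \<Rightarrow> real" where
  "fcomp' a b i x = a i * x - b i"

definition Fobj :: "nat \<Rightarrow> (nat \<Rightarrow> real) \<Rightarrow> (nat \<Rightarrow> real) \<Rightarrow> real \<Rightarrow> real" where
  "Fobj n a b x = (\<Sum>i<n. fcomp a b i x) / real n"

definition sgd_step :: "real \<Rightarrow> (nat \<Rightarrow> real) \<Rightarrow> (nat \<Rightarrow> real) \<Rightarrow> real \<Rightarrow> nat \<Rightarrow> real" where
  "sgd_step \<eta> a b x i = x - \<eta> * fcomp' a b i x"

definition epoch :: "real \<Rightarrow> (nat \<Rightarrow> real) \<Rightarrow> (nat \<Rightarrow> real) \<Rightarrow> real \<Rightarrow> nat list \<Rightarrow> real" where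
  "epoch \<eta> a b x \<sigma> = foldl (sgd_step \<eta> a b) x \<sigma>"

fun rr_iterate :: "nat \<Rightarrow> real \<Rightarrow> (nat \<Rightarrow> real) \<Rightarrow> (nat \<Rightarrow> real) \<Rightarrow> nat \<Rightarrow> real \<Rightarrow> real pmf" where
  "rr_iterate n \<eta> a b 0 x0 = return_pmf x0"
| "rr_iterate n \<eta> a b (Suc t) x0 =
     bind_pmf (rr_iterate n \<eta> a b t x0)
       (\<lambda>y. map_pmf (epoch \<eta> a b y) (pmf_of_set (permutations_of_set {..<n})))"

end

theory Submission
  imports Defs
begin

lemma pair_law:
  fixes n j l :: nat and h :: "nat \<Rightarrow> nat \<Rightarrow> real"
  assumes jl: "j < n" "l < n" "j \<noteq> l"
  defines "Off \<equiv> {p. fst p < n \<and> snd p < n \<and> fst p \<noteq> snd p}"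
  shows "(\<Sum>\<sigma>\<in>permutations_of_set {..<n}. h (\<sigma>!j) (\<sigma>!l))
          = real (card (permutations_of_set {..<n})) / real (card Off) * (\<Sum>p\<in>Off. h (fst p) (snd p))"
proof -
  define A where "A = {..<n::nat}"
  define Ps where "Ps = permutations_of_set A"
  define f where "f = (\<lambda>\<sigma>::nat list. (\<sigma>!j, \<sigma>!l))"
  define fib where "fib = (\<lambda>p. {\<sigma>\<in>Ps. f \<sigma> = p})"
  have finPs: "finite Ps" by (simp add: Ps_def)
  have finOff: "finite Off"
    by (rule finite_subset[of _ "{..<n} \<times> {..<n}"]) (auto simp: Off_def)
  have img: "f ` Ps \<subseteq> Off"
  proof
    fix p assume "p \<in> f ` Ps"
    then obtain \<sigma> where s: "\<sigma> \<in> Ps" "p = f \<sigma>" by auto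
    have len: "length \<sigma> = n" using s(1) length_finite_permutations_of_set[of \<sigma> A]
      by (simp add: Ps_def A_def)
    have set: "set \<sigma> = A" "distinct \<sigma>" using s(1) permutations_of_setD by (auto simp: Ps_def)
    have "\<sigma>!j \<in> A" "\<sigma>!l \<in> A" using set len jl nth_mem by (metis)+
    moreover have "\<sigma>!j \<noteq> \<sigma>!l" using set(2) len jl nth_eq_iff_index_eq by metis
    ultimately show "p \<in> Off" using s by (auto simp: Off_def f_def A_def)
  qed
  have le: "card (fib p) \<le> card (fib q)" if p: "p \<in> Off" and q: "q \<in> Off" for p q
  proof -
    obtain i m where pim: "p = (i, m)" by (cases p)
    obtain i' m' where qim: "q = (i', m')" by (cases q)
    have h1: "i \<in> A" "m \<in> A" "i \<noteq> m" "i' \<in> A" "m' \<in> A" "i' \<noteq> m'"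
      using p q pim qim by (auto simp: Off_def A_def)
    define \<tau>1 where "\<tau>1 = Transposition.transpose i i'"
    define m1 where "m1 = \<tau>1 m"
    define \<pi> where "\<pi> = Transposition.transpose m1 m' \<circ> \<tau>1"
    have m1A: "m1 \<in> A" using h1 unfolding m1_def \<tau>1_def Transposition.transpose_def by simp
    have m1i: "m1 \<noteq> i'" using h1 unfolding m1_def \<tau>1_def Transposition.transpose_def by simp
    have perm: "\<pi> permutes A" unfolding \<pi>_def \<tau>1_def
      by (intro permutes_compose permutes_swap_id) (use h1 m1A in auto)
    have pi_i: "\<pi> i = i'" using h1 m1i unfolding \<pi>_def \<tau>1_def by simp
    have pi_m: "\<pi> m = m'" unfolding \<pi>_def m1_def by simp
    have "inj_on (map \<pi>) (fib p)"
      using inj_mapI[OF permutes_inj[OF perm]] inj_on_subset subset_UNIV by blast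
    moreover have "map \<pi> ` fib p \<subseteq> fib q"
    proof
      fix \<rho> assume "\<rho> \<in> map \<pi> ` fib p"
      then obtain \<sigma> where s: "\<sigma> \<in> Ps" "f \<sigma> = p" "\<rho> = map \<pi> \<sigma>" by (auto simp: fib_def)
      have len: "length \<sigma> = n" using s(1) length_finite_permutations_of_set[of \<sigma> A]
        by (simp add: Ps_def A_def)
      have set: "set \<sigma> = A" "distinct \<sigma>" using s(1) permutations_of_setD by (auto simp: Ps_def)
      have "set \<rho> = A" using set s(3) permutes_image[OF perm] by simp
      moreover have "distinct \<rho>" using set s(3) permutes_inj_on[OF perm] distinct_map by blast
      moreover have "f \<rho> = q" using s len jl pim qim pi_i pi_m by (auto simp: f_def)
      ultimately show "\<rho> \<in> fib q" by (auto simp: fib_def Ps_def)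
    qed
    moreover have "finite (fib q)" using finPs by (auto simp: fib_def)
    ultimately show ?thesis by (rule card_inj_on_le)
  qed
  obtain K where K: "\<And>p. p \<in> Off \<Longrightarrow> card (fib p) = K"
  proof (cases "Off = {}")
    case True then show ?thesis using that by auto
  next
    case False
    then obtain p0 where "p0 \<in> Off" by auto
    then show ?thesis using that[of "card (fib p0)"] le by (meson antisym)
  qed
  have "(\<Sum>\<sigma>\<in>Ps. h (\<sigma>!j) (\<sigma>!l)) = (\<Sum>p\<in>Off. \<Sum>\<sigma>\<in>fib p. h (\<sigma>!j) (\<sigma>!l))"
    using sum.group[OF finPs finOff img, of "\<lambda>\<sigma>. h (\<sigma>!j) (\<sigma>!l)"] by (simp add: fib_def)
  also have "\<dots> = (\<Sum>p\<in>Off. real K * h (fst p) (snd p))"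
  proof (intro sum.cong refl)
    fix p assume p: "p \<in> Off"
    have "(\<Sum>\<sigma>\<in>fib p. h (\<sigma>!j) (\<sigma>!l)) = (\<Sum>\<sigma>\<in>fib p. h (fst p) (snd p))"
      by (intro sum.cong refl) (auto simp: fib_def f_def)
    then show "(\<Sum>\<sigma>\<in>fib p. h (\<sigma>!j) (\<sigma>!l)) = real K * h (fst p) (snd p)"
      using K[OF p] by simp
  qed
  finally have s1: "(\<Sum>\<sigma>\<in>Ps. h (\<sigma>!j) (\<sigma>!l)) = real K * (\<Sum>p\<in>Off. h (fst p) (snd p))"
    by (simp add: sum_distrib_left)
  have "card Ps = (\<Sum>p\<in>Off. card (fib p))"
    using sum.group[OF finPs finOff img, of "\<lambda>_. 1::nat"] by (simp add: fib_def)
  also have "\<dots> = K * card Off" using K by simp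
  finally have s2: "card Ps = K * card Off" .
  show ?thesis
  proof (cases "card Off = 0")
    case True
    then have "Off = {}" using finOff by auto
    then show ?thesis using s1 by (simp add: Ps_def A_def)
  next
    case False
    then show ?thesis using s1 s2 by (simp add: Ps_def A_def)
  qed
qed

definition Zl :: "(nat \<Rightarrow> real) \<Rightarrow> (nat \<Rightarrow> real) \<Rightarrow> nat list \<Rightarrow> real" where
  "Zl c g \<sigma> = foldl (\<lambda>z i. (1 - c i) * z + g i) 0 \<sigma>"
definition Pl :: "(nat \<Rightarrow> real) \<Rightarrow> nat list \<Rightarrow> real" where
  "Pl c \<sigma> = prod_list (map (\<lambda>i. 1 - c i) \<sigma>)"
definition Wp :: "(nat \<Rightarrow> real) \<Rightarrow> nat list \<Rightarrow> nat \<Rightarrow> real" where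
  "Wp g \<sigma> l = (\<Sum>j<l. g (\<sigma>!j))"
definition Ul :: "(nat \<Rightarrow> real) \<Rightarrow> (nat \<Rightarrow> real) \<Rightarrow> nat list \<Rightarrow> real" where
  "Ul c g \<sigma> = (\<Sum>l<length \<sigma>. c (\<sigma>!l) * Wp g \<sigma> l)"
definition Vl :: "(nat \<Rightarrow> real) \<Rightarrow> (nat \<Rightarrow> real) \<Rightarrow> nat list \<Rightarrow> real" where
  "Vl c g \<sigma> = (\<Sum>l<length \<sigma>. c (\<sigma>!l) * \<bar>Wp g \<sigma> l\<bar>)"
definition Cl :: "(nat \<Rightarrow> real) \<Rightarrow> nat list \<Rightarrow> real" where
  "Cl c \<sigma> = (\<Sum>l<length \<sigma>. c (\<sigma>!l))"

lemma Wp_append: "l \<le> length \<sigma> \<Longrightarrow> Wp g (\<sigma>@[i]) l = Wp g \<sigma> l"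
  unfolding Wp_def by (intro sum.cong refl) (auto simp: nth_append)

lemma Ul_snoc: "Ul c g (\<sigma>@[i]) = Ul c g \<sigma> + c i * Wp g \<sigma> (length \<sigma>)"
proof -
  have "Ul c g (\<sigma>@[i]) = (\<Sum>l<length \<sigma>. c ((\<sigma>@[i])!l) * Wp g (\<sigma>@[i]) l) + c i * Wp g (\<sigma>@[i]) (length \<sigma>)"
    by (simp add: Ul_def)
  also have "(\<Sum>l<length \<sigma>. c ((\<sigma>@[i])!l) * Wp g (\<sigma>@[i]) l) = Ul c g \<sigma>"
    unfolding Ul_def by (intro sum.cong refl) (auto simp: nth_append Wp_append)
  finally show ?thesis by (simp add: Wp_append)
qed

lemma Vl_snoc: "Vl c g (\<sigma>@[i]) = Vl c g \<sigma> + c i * \<bar>Wp g \<sigma> (length \<sigma>)\<bar>"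
proof -
  have "Vl c g (\<sigma>@[i]) = (\<Sum>l<length \<sigma>. c ((\<sigma>@[i])!l) * \<bar>Wp g (\<sigma>@[i]) l\<bar>) + c i * \<bar>Wp g (\<sigma>@[i]) (length \<sigma>)\<bar>"
    by (simp add: Vl_def)
  also have "(\<Sum>l<length \<sigma>. c ((\<sigma>@[i])!l) * \<bar>Wp g (\<sigma>@[i]) l\<bar>) = Vl c g \<sigma>"
    unfolding Vl_def by (intro sum.cong refl) (auto simp: nth_append Wp_append)
  finally show ?thesis by (simp add: Wp_append)
qed

lemma Cl_snoc: "Cl c (\<sigma>@[i]) = Cl c \<sigma> + c i"
proof -
  have "Cl c (\<sigma>@[i]) = (\<Sum>l<length \<sigma>. c ((\<sigma>@[i])!l)) + c i" by (simp add: Cl_def)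
  also have "(\<Sum>l<length \<sigma>. c ((\<sigma>@[i])!l)) = Cl c \<sigma>"
    unfolding Cl_def by (intro sum.cong refl) (auto simp: nth_append)
  finally show ?thesis .
qed

lemma Sp_snoc: "Wp g (\<sigma>@[i]) (length (\<sigma>@[i])) = Wp g \<sigma> (length \<sigma>) + g i"
  by (simp add: Wp_def nth_append)

lemma Zl_snoc: "Zl c g (\<sigma>@[i]) = (1 - c i) * Zl c g \<sigma> + g i"
  by (simp add: Zl_def)

lemma epoch_repr:
  assumes "\<And>i. g i = a i * xs - b i"
  shows "epoch \<eta> a b x \<sigma> - xs = Pl (\<lambda>i. \<eta> * a i) \<sigma> * (x - xs) - \<eta> * Zl (\<lambda>i. \<eta> * a i) g \<sigma>"
proof (induction \<sigma> rule: rev_induct)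
  case Nil then show ?case by (simp add: epoch_def Pl_def Zl_def)
next
  case (snoc i \<sigma>)
  define P where "P = Pl (\<lambda>i. \<eta> * a i) \<sigma>"
  define Z where "Z = Zl (\<lambda>i. \<eta> * a i) g \<sigma>"
  define E where "E = epoch \<eta> a b x \<sigma>"
  have hP: "Pl (\<lambda>i. \<eta> * a i) (\<sigma>@[i]) = P * (1 - \<eta> * a i)"
    by (simp add: Pl_def P_def)
  have hZ: "Zl (\<lambda>i. \<eta> * a i) g (\<sigma>@[i]) = (1 - \<eta> * a i) * Z + g i"
    by (simp add: Zl_snoc Z_def)
  have hs: "sgd_step \<eta> a b y i - xs = (1 - \<eta> * a i) * (y - xs) - \<eta> * g i" for y
  proof -
    have "\<eta> * g i = \<eta> * (a i * xs - b i)" using assms[of i] by simp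
    then show ?thesis by (simp add: sgd_step_def fcomp'_def algebra_simps)
  qed
  have IH: "E - xs = P * (x - xs) - \<eta> * Z" using snoc by (simp add: E_def P_def Z_def)
  have "epoch \<eta> a b x (\<sigma>@[i]) - xs = (1 - \<eta> * a i) * (E - xs) - \<eta> * g i"
    by (simp add: epoch_def E_def hs)
  also have "\<dots> = (1 - \<eta> * a i) * (P * (x - xs) - \<eta> * Z) - \<eta> * g i" by (simp add: IH)
  also have "\<dots> = (P * (1 - \<eta> * a i)) * (x - xs) - \<eta> * ((1 - \<eta> * a i) * Z + g i)"
    by (simp add: algebra_simps)
  finally show ?case by (simp add: hP hZ)
qed

lemma Z_bounds:
  shows "(\<forall>i\<in>set \<sigma>. 0 \<le> c i \<and> c i \<le> 1) \<Longrightarrow> \<bar>Zl c g \<sigma> - Wp g \<sigma> (length \<sigma>)\<bar> \<le> Vl c g \<sigma> \<and>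
         \<bar>Zl c g \<sigma> - Wp g \<sigma> (length \<sigma>) + Ul c g \<sigma>\<bar> \<le> Cl c \<sigma> * Vl c g \<sigma> \<and>
         0 \<le> Cl c \<sigma> \<and> 0 \<le> Vl c g \<sigma>"
proof (induction \<sigma> rule: rev_induct)
  case Nil then show ?case by (simp add: Zl_def Wp_def Ul_def Vl_def Cl_def)
next
  case (snoc i \<sigma>)
  have c: "0 \<le> c i" "c i \<le> 1" using snoc.prems by auto
  define T where "T = Zl c g \<sigma> - Wp g \<sigma> (length \<sigma>)"
  define S where "S = Wp g \<sigma> (length \<sigma>)"
  define U where "U = Ul c g \<sigma>"
  define V where "V = Vl c g \<sigma>"
  define C where "C = Cl c \<sigma>"
  have IH: "\<bar>T\<bar> \<le> V" "\<bar>T + U\<bar> \<le> C * V" "0 \<le> C" "0 \<le> V"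
    using snoc.IH snoc.prems by (auto simp: T_def U_def V_def C_def)
  have ci: "0 \<le> c i" "c i \<le> 1" using c by auto
  have e1: "Zl c g (\<sigma>@[i]) - Wp g (\<sigma>@[i]) (length (\<sigma>@[i])) = (1 - c i) * T - c i * S"
    unfolding Zl_snoc Sp_snoc T_def S_def by (simp add: algebra_simps)
  have e2: "Ul c g (\<sigma>@[i]) = U + c i * S" by (simp add: Ul_snoc U_def S_def)
  have e3: "Vl c g (\<sigma>@[i]) = V + c i * \<bar>S\<bar>" by (simp add: Vl_snoc V_def S_def)
  have e4: "Cl c (\<sigma>@[i]) = C + c i" by (simp add: Cl_snoc C_def)
  have b1: "\<bar>(1 - c i) * T - c i * S\<bar> \<le> V + c i * \<bar>S\<bar>"
  proof -
    have "\<bar>(1 - c i) * T - c i * S\<bar> \<le> \<bar>(1 - c i) * T\<bar> + \<bar>c i * S\<bar>" by (rule abs_triangle_ineq4)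
    also have "\<dots> = (1 - c i) * \<bar>T\<bar> + c i * \<bar>S\<bar>" using ci by (simp add: abs_mult)
    also have "\<dots> \<le> 1 * \<bar>T\<bar> + c i * \<bar>S\<bar>" using ci by (intro add_mono mult_right_mono) auto
    finally show ?thesis using IH by simp
  qed
  have b2: "\<bar>(1 - c i) * T - c i * S + (U + c i * S)\<bar> \<le> (C + c i) * (V + c i * \<bar>S\<bar>)"
  proof -
    have "(1 - c i) * T - c i * S + (U + c i * S) = (T + U) - c i * T" by (simp add: algebra_simps)
    then have "\<bar>(1 - c i) * T - c i * S + (U + c i * S)\<bar> \<le> \<bar>T + U\<bar> + c i * \<bar>T\<bar>"
      using ci abs_triangle_ineq4[of "T+U" "c i * T"] by (simp add: abs_mult)
    also have "\<dots> \<le> C * V + c i * V" using IH ci by (intro add_mono mult_left_mono) auto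
    also have "\<dots> \<le> (C + c i) * (V + c i * \<bar>S\<bar>)" using IH ci
      by (simp add: algebra_simps)
    finally show ?thesis .
  qed
  show ?case using b1 b2 e1 e2 e3 e4 IH ci by simp
qed

lemma Off_facts:
  fixes n :: nat and f :: "nat \<Rightarrow> nat \<Rightarrow> real"
  defines "Off \<equiv> {p. fst p < n \<and> snd p < n \<and> fst p \<noteq> snd p}"
  shows "real (card Off) = real n * (real n - 1)"
    and "(\<Sum>p\<in>Off. f (fst p) (snd p)) = (\<Sum>i<n. \<Sum>m<n. f i m) - (\<Sum>i<n. f i i)"
proof -
  define D where "D = (\<lambda>i. (i,i)) ` {..<n}"
  have OD: "Off = ({..<n} \<times> {..<n}) - D" by (auto simp: Off_def D_def)
  have Dsub: "D \<subseteq> {..<n} \<times> {..<n}" by (auto simp: D_def)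
  have cD: "card D = n" unfolding D_def by (subst card_image) (auto simp: inj_on_def)
  have "card Off = n * n - n" unfolding OD
    by (subst card_Diff_subset) (auto simp: Dsub cD finite_subset[OF Dsub] card_cartesian_product)
  moreover have "n \<le> n * n" by (cases n) auto
  ultimately show "real (card Off) = real n * (real n - 1)"
    by (simp add: of_nat_diff algebra_simps)
  have "(\<Sum>p\<in>Off. f (fst p) (snd p)) = (\<Sum>p\<in>{..<n} \<times> {..<n}. f (fst p) (snd p)) - (\<Sum>p\<in>D. f (fst p) (snd p))"
    unfolding OD by (rule sum_diff) (auto simp: Dsub)
  also have "(\<Sum>p\<in>{..<n} \<times> {..<n}. f (fst p) (snd p)) = (\<Sum>i<n. \<Sum>m<n. f i m)"
    by (simp add: sum.cartesian_product case_prod_beta)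
  also have "(\<Sum>p\<in>D. f (fst p) (snd p)) = (\<Sum>i<n. f i i)"
    unfolding D_def by (subst sum.reindex) (auto simp: inj_on_def)
  finally show "(\<Sum>p\<in>Off. f (fst p) (snd p)) = (\<Sum>i<n. \<Sum>m<n. f i m) - (\<Sum>i<n. f i i)" .
qed

lemma pair_law2:
  fixes n j l :: nat and h :: "nat \<Rightarrow> nat \<Rightarrow> real"
  assumes "j < n" "l < n" "j \<noteq> l"
  shows "(\<Sum>\<sigma>\<in>permutations_of_set {..<n}. h (\<sigma>!j) (\<sigma>!l))
          = real (card (permutations_of_set {..<n})) / (real n * (real n - 1)) *
            ((\<Sum>i<n. \<Sum>m<n. h i m) - (\<Sum>i<n. h i i))"
  using pair_law[where h=h, OF assms] Off_facts(1)[where n=n] Off_facts(2)[where n=n and f=h] by simp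

lemma perm_basic:
  assumes "\<sigma> \<in> permutations_of_set {..<n}"
  shows "length \<sigma> = n" "\<And>j. j < n \<Longrightarrow> \<sigma>!j < n"
    "\<And>f. (\<Sum>j<n. f (\<sigma>!j)) = (\<Sum>i<n. (f i :: real))"
proof -
  have s: "set \<sigma> = {..<n}" "distinct \<sigma>" using permutations_of_setD[OF assms] by auto
  show l: "length \<sigma> = n" using length_finite_permutations_of_set[OF assms] by simp
  show "\<And>j. j < n \<Longrightarrow> \<sigma>!j < n" using s l nth_mem by (metis lessThan_iff)
  fix f :: "nat \<Rightarrow> real"
  have "(\<Sum>j<n. f (\<sigma>!j)) = sum_list (map f \<sigma>)"
    by (simp add: sum_list_sum_nth l atLeast0LessThan)
  also have "\<dots> = sum f (set \<sigma>)" by (simp add: sum.distinct_set_conv_list[OF s(2)])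
  finally show "(\<Sum>j<n. f (\<sigma>!j)) = (\<Sum>i<n. f i)" using s by simp
qed

lemma W_sq_sum:
  fixes g :: "nat \<Rightarrow> real"
  assumes n2: "2 \<le> n" and gb: "\<forall>i<n. \<bar>g i\<bar> \<le> G" and gs: "(\<Sum>i<n. g i) = 0" and l: "l \<le> n"
  shows "(\<Sum>\<sigma>\<in>permutations_of_set {..<n}. (Wp g \<sigma> l)\<^sup>2)
           \<le> real l * real (card (permutations_of_set {..<n})) * G\<^sup>2"
proof -
  define Ps where "Ps = permutations_of_set {..<n}"
  define N where "N = real (card Ps)"
  have inner: "(\<Sum>\<sigma>\<in>Ps. g (\<sigma>!j) * g (\<sigma>!j')) \<le> (if j = j' then N * G\<^sup>2 else 0)"
    if j: "j < l" "j' < l" for j j'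
  proof (cases "j = j'")
    case True
    have "(\<Sum>\<sigma>\<in>Ps. g (\<sigma>!j) * g (\<sigma>!j')) \<le> (\<Sum>\<sigma>\<in>Ps. G\<^sup>2)"
    proof (rule sum_mono)
      fix \<sigma> assume "\<sigma> \<in> Ps"
      then have "\<sigma>!j < n" using perm_basic(2) j l by (auto simp: Ps_def)
      then have "\<bar>g (\<sigma>!j)\<bar> \<le> G" using gb by auto
      then have "\<bar>g (\<sigma>!j)\<bar> \<le> \<bar>G\<bar>" by linarith
      then have "(g (\<sigma>!j))\<^sup>2 \<le> G\<^sup>2" by (simp only: abs_le_square_iff)
      then show "g (\<sigma>!j) * g (\<sigma>!j') \<le> G\<^sup>2" using True by (simp add: power2_eq_square)
    qed
    then show ?thesis using True by (simp add: N_def)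
  next
    case False
    have "(\<Sum>\<sigma>\<in>Ps. g (\<sigma>!j) * g (\<sigma>!j')) = N / (real n * (real n - 1)) *
            ((\<Sum>i<n. \<Sum>m<n. g i * g m) - (\<Sum>i<n. g i * g i))"
      unfolding Ps_def N_def using pair_law2[of j n j' "\<lambda>i m. g i * g m"] j l False by simp
    also have "(\<Sum>i<n. \<Sum>m<n. g i * g m) = (\<Sum>i<n. g i) * (\<Sum>m<n. g m)"
      by (simp add: sum_product)
    also have "N / (real n * (real n - 1)) * ((\<Sum>i<n. g i) * (\<Sum>m<n. g m) - (\<Sum>i<n. g i * g i)) \<le> 0"
    proof -
      have "0 \<le> N / (real n * (real n - 1))" using n2 by (simp add: N_def)
      moreover have "0 \<le> (\<Sum>i<n. g i * g i)" by (intro sum_nonneg) simp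
      ultimately have h: "0 \<le> N / (real n * (real n - 1)) * (\<Sum>i<n. g i * g i)" by (rule mult_nonneg_nonneg)
      have "N / (real n * (real n - 1)) * ((\<Sum>i<n. g i) * (\<Sum>m<n. g m) - (\<Sum>i<n. g i * g i))
          = - (N / (real n * (real n - 1)) * (\<Sum>i<n. g i * g i))" using gs by simp
      then show ?thesis using h by linarith
    qed
    finally show ?thesis using False by simp
  qed
  have "(\<Sum>\<sigma>\<in>Ps. (Wp g \<sigma> l)\<^sup>2) = (\<Sum>\<sigma>\<in>Ps. \<Sum>j<l. \<Sum>j'<l. g (\<sigma>!j) * g (\<sigma>!j'))"
    by (simp add: Wp_def power2_eq_square sum_product)
  also have "\<dots> = (\<Sum>j<l. \<Sum>j'<l. \<Sum>\<sigma>\<in>Ps. g (\<sigma>!j) * g (\<sigma>!j'))"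
    by (subst sum.swap) (simp add: sum.swap[of _ Ps])
  also have "\<dots> \<le> (\<Sum>j<l. \<Sum>j'<l. (if j = j' then N * G\<^sup>2 else 0))"
    by (intro sum_mono inner) auto
  also have "\<dots> = real l * N * G\<^sup>2" by simp
  finally show ?thesis by (simp add: Ps_def N_def)
qed

lemma cross_sum:
  fixes g c :: "nat \<Rightarrow> real"
  assumes n2: "2 \<le> n" and gb: "\<forall>i<n. \<bar>g i\<bar> \<le> G" and gs: "(\<Sum>i<n. g i) = 0"
    and cb: "\<forall>i<n. 0 \<le> c i \<and> c i \<le> cm" and jl: "j < l" "l < n"
  shows "\<bar>\<Sum>\<sigma>\<in>permutations_of_set {..<n}. c (\<sigma>!l) * g (\<sigma>!j)\<bar>
           \<le> real (card (permutations_of_set {..<n})) * G * cm / (real n - 1)"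
proof -
  define N where "N = real (card (permutations_of_set {..<n}))"
  have "(\<Sum>\<sigma>\<in>permutations_of_set {..<n}. c (\<sigma>!l) * g (\<sigma>!j))
      = (\<Sum>\<sigma>\<in>permutations_of_set {..<n}. g (\<sigma>!j) * c (\<sigma>!l))" by (simp add: mult.commute)
  also have "\<dots> = N / (real n * (real n - 1)) *
            ((\<Sum>i<n. \<Sum>m<n. g i * c m) - (\<Sum>i<n. g i * c i))"
    unfolding N_def using pair_law2[of j n l "\<lambda>i m. g i * c m"] jl by simp
  also have "(\<Sum>i<n. \<Sum>m<n. g i * c m) = (\<Sum>i<n. g i) * (\<Sum>m<n. c m)"
    by (simp add: sum_product)
  finally have e: "(\<Sum>\<sigma>\<in>permutations_of_set {..<n}. c (\<sigma>!l) * g (\<sigma>!j))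
      = - (N / (real n * (real n - 1)) * (\<Sum>i<n. g i * c i))" using gs by simp
  have "\<bar>\<Sum>i<n. g i * c i\<bar> \<le> (\<Sum>i<n. \<bar>g i * c i\<bar>)" by (rule sum_abs)
  also have "\<dots> \<le> (\<Sum>i<n. G * cm)"
  proof (rule sum_mono)
    fix i assume "i \<in> {..<n}"
    then have "\<bar>g i\<bar> \<le> G" "0 \<le> c i" "c i \<le> cm" using gb cb by auto
    then show "\<bar>g i * c i\<bar> \<le> G * cm" by (simp add: abs_mult mult_mono)
  qed
  finally have b: "\<bar>\<Sum>i<n. g i * c i\<bar> \<le> real n * (G * cm)" by simp
  have pos: "0 \<le> N / (real n * (real n - 1))" using n2 by (simp add: N_def)
  have "\<bar>\<Sum>\<sigma>\<in>permutations_of_set {..<n}. c (\<sigma>!l) * g (\<sigma>!j)\<bar>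
       = N / (real n * (real n - 1)) * \<bar>\<Sum>i<n. g i * c i\<bar>" unfolding e using pos
    by (simp only: abs_minus_cancel abs_mult abs_of_nonneg)
  also have "\<dots> \<le> N / (real n * (real n - 1)) * (real n * (G * cm))"
    by (rule mult_left_mono[OF b pos])
  also have "\<dots> = N * G * cm / (real n - 1)" using n2 by (simp add: field_simps)
  finally show ?thesis by (simp add: N_def)
qed

lemma abs_W_sum:
  fixes g :: "nat \<Rightarrow> real"
  assumes n2: "2 \<le> n" and gb: "\<forall>i<n. \<bar>g i\<bar> \<le> G" and G: "0 < G" and gs: "(\<Sum>i<n. g i) = 0" and l: "l \<le> n"
  shows "(\<Sum>\<sigma>\<in>permutations_of_set {..<n}. \<bar>Wp g \<sigma> l\<bar>)
           \<le> real (card (permutations_of_set {..<n})) * (sqrt (real n) * G)"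
proof -
  define N where "N = real (card (permutations_of_set {..<n}))"
  define s where "s = sqrt (real n) * G"
  have s0: "0 < s" using n2 G by (simp add: s_def)
  have ss: "s * s = real n * G\<^sup>2" using n2 by (simp add: s_def power2_eq_square algebra_simps)
  have pw: "\<bar>w\<bar> \<le> (w\<^sup>2 / s + s) / 2" for w :: real
  proof -
    have "0 \<le> (\<bar>w\<bar> - s)\<^sup>2" by simp
    then have "2 * s * \<bar>w\<bar> \<le> w\<^sup>2 + s * s" by (simp add: power2_eq_square algebra_simps)
    then show ?thesis using s0 by (simp add: field_simps power2_eq_square)
  qed
  have "(\<Sum>\<sigma>\<in>permutations_of_set {..<n}. \<bar>Wp g \<sigma> l\<bar>)
        \<le> (\<Sum>\<sigma>\<in>permutations_of_set {..<n}. ((Wp g \<sigma> l)\<^sup>2 / s + s) / 2)"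
    by (intro sum_mono pw)
  also have "\<dots> = ((\<Sum>\<sigma>\<in>permutations_of_set {..<n}. (Wp g \<sigma> l)\<^sup>2) / s + N * s) / 2"
    by (simp add: sum_divide_distrib[symmetric] sum.distrib N_def)
  also have "\<dots> \<le> ((real n * N * G\<^sup>2) / s + N * s) / 2"
  proof -
    have "(\<Sum>\<sigma>\<in>permutations_of_set {..<n}. (Wp g \<sigma> l)\<^sup>2) \<le> real l * N * G\<^sup>2"
      using W_sq_sum[OF n2 gb gs l] by (simp add: N_def)
    also have "\<dots> \<le> real n * N * G\<^sup>2" using l by (intro mult_right_mono) (auto simp: N_def)
    finally show ?thesis using s0 by (intro divide_right_mono add_right_mono) auto
  qed
  also have "\<dots> = N * s" using s0 ss by (simp add: field_simps)
  finally show ?thesis by (simp add: N_def s_def)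
qed

lemma perm_stats:
  fixes n :: nat and c g :: "nat \<Rightarrow> real" and G cm :: real
  assumes n2: "2 \<le> n" and cb: "\<forall>i<n. 0 \<le> c i \<and> c i \<le> cm" and cm1: "cm \<le> 1"
    and gb: "\<forall>i<n. \<bar>g i\<bar> \<le> G" and G: "0 < G" and gs: "(\<Sum>i<n. g i) = 0"
  shows "(\<Sum>\<sigma>\<in>permutations_of_set {..<n}. (Zl c g \<sigma>)\<^sup>2)
           \<le> real (card (permutations_of_set {..<n})) * (real n ^ 3 * cm\<^sup>2 * G\<^sup>2)"
    and "\<bar>\<Sum>\<sigma>\<in>permutations_of_set {..<n}. Zl c g \<sigma>\<bar>
           \<le> real (card (permutations_of_set {..<n})) *
              (real n * cm * G + (\<Sum>i<n. c i) * (real n * cm * (sqrt (real n) * G)))"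
proof -
  define Ps where "Ps = permutations_of_set {..<n}"
  define N where "N = real (card Ps)"
  define Ct where "Ct = (\<Sum>i<n. c i)"
  have "0 \<le> c 0 \<and> c 0 \<le> cm" using cb n2 by auto
  then have cm0: "0 \<le> cm" by linarith
  have Ct0: "0 \<le> Ct" unfolding Ct_def using cb by (intro sum_nonneg) auto
  have pt: "\<bar>Zl c g \<sigma>\<bar> \<le> Vl c g \<sigma> \<and> \<bar>Zl c g \<sigma> + Ul c g \<sigma>\<bar> \<le> Ct * Vl c g \<sigma> \<and> 0 \<le> Vl c g \<sigma>
           \<and> length \<sigma> = n" if s: "\<sigma> \<in> Ps" for \<sigma>
  proof -
    have len: "length \<sigma> = n" using perm_basic(1) s by (simp add: Ps_def)
    have st: "set \<sigma> = {..<n}" using permutations_of_setD s by (simp add: Ps_def)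
    have "\<forall>i\<in>set \<sigma>. 0 \<le> c i \<and> c i \<le> 1" using st cb cm1 by force
    note zb = Z_bounds[where g=g, OF this]
    have w0: "Wp g \<sigma> (length \<sigma>) = 0" using perm_basic(3)[of \<sigma> n g] s gs len by (simp add: Wp_def Ps_def)
    have ct: "Cl c \<sigma> = Ct" using perm_basic(3)[of \<sigma> n c] s len by (simp add: Cl_def Ps_def Ct_def)
    show ?thesis using zb w0 ct len by simp
  qed
  have sq: "(Zl c g \<sigma>)\<^sup>2 \<le> real n * cm\<^sup>2 * (\<Sum>l<n. (Wp g \<sigma> l)\<^sup>2)" if s: "\<sigma> \<in> Ps" for \<sigma>
  proof -
    have V: "Vl c g \<sigma> = (\<Sum>l<n. c (\<sigma>!l) * \<bar>Wp g \<sigma> l\<bar>)" using pt[OF s] by (simp add: Vl_def)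
    have "\<bar>Zl c g \<sigma>\<bar> \<le> \<bar>Vl c g \<sigma>\<bar>" using pt[OF s] by simp
    then have "(Zl c g \<sigma>)\<^sup>2 \<le> (Vl c g \<sigma>)\<^sup>2" by (simp only: abs_le_square_iff)
    also have "\<dots> \<le> (\<Sum>l<n. (c (\<sigma>!l) * \<bar>Wp g \<sigma> l\<bar>)\<^sup>2) * real n"
      unfolding V using sum_squared_le_sum_of_squares[of "\<lambda>l. c (\<sigma>!l) * \<bar>Wp g \<sigma> l\<bar>" "{..<n}"] by simp
    also have "\<dots> \<le> (\<Sum>l<n. cm\<^sup>2 * (Wp g \<sigma> l)\<^sup>2) * real n"
    proof (intro mult_right_mono sum_mono)
      fix l assume "l \<in> {..<n}"
      then have "\<sigma>!l < n" using perm_basic(2) s by (auto simp: Ps_def)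
      then have "0 \<le> c (\<sigma>!l)" "c (\<sigma>!l) \<le> cm" using cb by auto
      then have "(c (\<sigma>!l))\<^sup>2 \<le> cm\<^sup>2" by (simp add: power_mono)
      then show "(c (\<sigma>!l) * \<bar>Wp g \<sigma> l\<bar>)\<^sup>2 \<le> cm\<^sup>2 * (Wp g \<sigma> l)\<^sup>2"
        by (simp add: power_mult_distrib mult_right_mono)
    qed simp
    also have "\<dots> = real n * cm\<^sup>2 * (\<Sum>l<n. (Wp g \<sigma> l)\<^sup>2)"
      by (simp add: sum_distrib_left[symmetric] algebra_simps)
    finally show ?thesis .
  qed
  have "(\<Sum>\<sigma>\<in>Ps. (Zl c g \<sigma>)\<^sup>2) \<le> (\<Sum>\<sigma>\<in>Ps. real n * cm\<^sup>2 * (\<Sum>l<n. (Wp g \<sigma> l)\<^sup>2))"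
    by (intro sum_mono sq)
  also have "\<dots> = real n * cm\<^sup>2 * (\<Sum>l<n. \<Sum>\<sigma>\<in>Ps. (Wp g \<sigma> l)\<^sup>2)"
    by (simp add: sum_distrib_left[symmetric] sum.swap[of _ Ps])
  also have "\<dots> \<le> real n * cm\<^sup>2 * (\<Sum>l<n. real n * N * G\<^sup>2)"
  proof (intro mult_left_mono sum_mono)
    fix l assume "l \<in> {..<n}"
    then have "(\<Sum>\<sigma>\<in>Ps. (Wp g \<sigma> l)\<^sup>2) \<le> real l * N * G\<^sup>2"
      using W_sq_sum[OF n2 gb gs, of l] by (simp add: Ps_def N_def)
    also have "\<dots> \<le> real n * N * G\<^sup>2" using \<open>l \<in> {..<n}\<close>
      by (intro mult_right_mono) (auto simp: N_def)
    finally show "(\<Sum>\<sigma>\<in>Ps. (Wp g \<sigma> l)\<^sup>2) \<le> real n * N * G\<^sup>2" .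
  qed simp
  also have "\<dots> = N * (real n ^ 3 * cm\<^sup>2 * G\<^sup>2)" by (simp add: power3_eq_cube power2_eq_square)
  finally show "(\<Sum>\<sigma>\<in>permutations_of_set {..<n}. (Zl c g \<sigma>)\<^sup>2)
           \<le> real (card (permutations_of_set {..<n})) * (real n ^ 3 * cm\<^sup>2 * G\<^sup>2)"
    by (simp add: Ps_def N_def)
  have sU: "(\<Sum>\<sigma>\<in>Ps. Ul c g \<sigma>) = (\<Sum>l<n. \<Sum>j<l. \<Sum>\<sigma>\<in>Ps. c (\<sigma>!l) * g (\<sigma>!j))"
  proof -
    have "(\<Sum>\<sigma>\<in>Ps. Ul c g \<sigma>) = (\<Sum>\<sigma>\<in>Ps. \<Sum>l<n. \<Sum>j<l. c (\<sigma>!l) * g (\<sigma>!j))"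
      using pt by (intro sum.cong refl) (simp add: Ul_def Wp_def sum_distrib_left)
    also have "\<dots> = (\<Sum>l<n. \<Sum>j<l. \<Sum>\<sigma>\<in>Ps. c (\<sigma>!l) * g (\<sigma>!j))"
      by (subst sum.swap) (simp add: sum.swap[of _ Ps])
    finally show ?thesis .
  qed
  have bU: "\<bar>\<Sum>\<sigma>\<in>Ps. Ul c g \<sigma>\<bar> \<le> real n * (N * G * cm)"
  proof -
    have "\<bar>\<Sum>\<sigma>\<in>Ps. Ul c g \<sigma>\<bar> \<le> (\<Sum>l<n. \<Sum>j<l. \<bar>\<Sum>\<sigma>\<in>Ps. c (\<sigma>!l) * g (\<sigma>!j)\<bar>)"
      unfolding sU by (rule order_trans[OF sum_abs sum_mono]) (rule sum_abs)
    also have "\<dots> \<le> (\<Sum>l<n. \<Sum>j<l. N * G * cm / (real n - 1))"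
      using cross_sum[OF n2 gb gs cb] by (intro sum_mono) (auto simp: N_def Ps_def)
    also have "\<dots> \<le> (\<Sum>l<n. N * G * cm)"
    proof (rule sum_mono)
      fix l assume "l \<in> {..<n}"
      then have "real l \<le> real n - 1" by auto
      moreover have "0 \<le> N * G * cm" using G cm0 by (simp add: N_def)
      moreover have "0 < real n - 1" using n2 by simp
      ultimately have q: "real l / (real n - 1) \<le> 1" "0 \<le> N * G * cm" by simp_all
      have "N * G * cm * (real l / (real n - 1)) \<le> N * G * cm * 1"
        by (rule mult_left_mono[OF q])
      then have "real l * (N * G * cm / (real n - 1)) \<le> N * G * cm" by (simp add: mult.commute)
      then show "(\<Sum>j<l. N * G * cm / (real n - 1)) \<le> N * G * cm" by simp
    qed
    finally show ?thesis by simp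
  qed
  have bV: "(\<Sum>\<sigma>\<in>Ps. Vl c g \<sigma>) \<le> real n * (cm * (N * (sqrt (real n) * G)))"
  proof -
    have "(\<Sum>\<sigma>\<in>Ps. Vl c g \<sigma>) = (\<Sum>l<n. \<Sum>\<sigma>\<in>Ps. c (\<sigma>!l) * \<bar>Wp g \<sigma> l\<bar>)"
      using pt by (subst sum.swap) (intro sum.cong refl, simp add: Vl_def)
    also have "\<dots> \<le> (\<Sum>l<n. \<Sum>\<sigma>\<in>Ps. cm * \<bar>Wp g \<sigma> l\<bar>)"
    proof (intro sum_mono mult_right_mono)
      fix l \<sigma> assume "l \<in> {..<n}" "\<sigma> \<in> Ps"
      then have "\<sigma>!l < n" using perm_basic(2) by (auto simp: Ps_def)
      then show "c (\<sigma>!l) \<le> cm" using cb by auto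
    qed simp
    also have "\<dots> \<le> (\<Sum>l<n. cm * (N * (sqrt (real n) * G)))"
    proof (rule sum_mono)
      fix l assume "l \<in> {..<n}"
      then show "(\<Sum>\<sigma>\<in>Ps. cm * \<bar>Wp g \<sigma> l\<bar>) \<le> cm * (N * (sqrt (real n) * G))"
        using abs_W_sum[OF n2 gb G gs, of l] cm0
        by (simp add: sum_distrib_left[symmetric] Ps_def N_def mult_left_mono)
    qed
    finally show ?thesis by simp
  qed
  have "\<bar>\<Sum>\<sigma>\<in>Ps. Zl c g \<sigma>\<bar> = \<bar>(\<Sum>\<sigma>\<in>Ps. Zl c g \<sigma> + Ul c g \<sigma>) - (\<Sum>\<sigma>\<in>Ps. Ul c g \<sigma>)\<bar>"
    by (simp add: sum.distrib)
  also have "\<dots> \<le> \<bar>\<Sum>\<sigma>\<in>Ps. Zl c g \<sigma> + Ul c g \<sigma>\<bar> + \<bar>\<Sum>\<sigma>\<in>Ps. Ul c g \<sigma>\<bar>"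
    by (rule abs_triangle_ineq4)
  also have "\<bar>\<Sum>\<sigma>\<in>Ps. Zl c g \<sigma> + Ul c g \<sigma>\<bar> \<le> (\<Sum>\<sigma>\<in>Ps. Ct * Vl c g \<sigma>)"
    using pt by (intro order_trans[OF sum_abs] sum_mono) auto
  also have "(\<Sum>\<sigma>\<in>Ps. Ct * Vl c g \<sigma>) \<le> Ct * (real n * (cm * (N * (sqrt (real n) * G))))"
    using bV Ct0 by (simp add: sum_distrib_left[symmetric] mult_left_mono)
  finally have "\<bar>\<Sum>\<sigma>\<in>Ps. Zl c g \<sigma>\<bar> \<le> Ct * (real n * (cm * (N * (sqrt (real n) * G)))) + real n * (N * G * cm)"
    using bU by linarith
  then show "\<bar>\<Sum>\<sigma>\<in>permutations_of_set {..<n}. Zl c g \<sigma>\<bar>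
           \<le> real (card (permutations_of_set {..<n})) *
              (real n * cm * G + (\<Sum>i<n. c i) * (real n * cm * (sqrt (real n) * G)))"
    by (simp add: Ps_def N_def Ct_def algebra_simps)
qed

definition EP :: "'a pmf \<Rightarrow> ('a \<Rightarrow> real) \<Rightarrow> real" where
  "EP M f = (\<Sum>a\<in>set_pmf M. pmf M a * f a)"

lemma EP_expectation: "finite (set_pmf M) \<Longrightarrow> measure_pmf.expectation M f = EP M f"
  unfolding EP_def by (subst integral_measure_pmf_real[of "set_pmf M"]) (auto simp: mult.commute)

lemma EP_lin: "finite (set_pmf M) \<Longrightarrow>
   EP M (\<lambda>y. \<alpha> * f y + \<beta> * g y + \<gamma>) = \<alpha> * EP M f + \<beta> * EP M g + \<gamma>"
proof -
  assume fin: "finite (set_pmf M)"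
  have s1: "(\<Sum>a\<in>set_pmf M. pmf M a) = 1" using sum_pmf_eq_1[OF fin] by simp
  have "EP M (\<lambda>y. \<alpha> * f y + \<beta> * g y + \<gamma>)
     = (\<Sum>a\<in>set_pmf M. \<alpha> * (pmf M a * f a) + \<beta> * (pmf M a * g a) + \<gamma> * pmf M a)"
    unfolding EP_def by (intro sum.cong refl) (simp add: algebra_simps)
  also have "\<dots> = \<alpha> * EP M f + \<beta> * EP M g + \<gamma> * (\<Sum>a\<in>set_pmf M. pmf M a)"
    by (simp add: EP_def sum.distrib sum_distrib_left)
  finally show ?thesis using s1 by simp
qed

lemma EP_mono: "(\<And>x. x \<in> set_pmf M \<Longrightarrow> f x \<le> g x) \<Longrightarrow> EP M f \<le> EP M g"
  unfolding EP_def by (intro sum_mono mult_left_mono) auto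

lemma fin_rr: "finite (set_pmf (rr_iterate n \<eta> a b t x0))"
proof (induction t)
  case 0 then show ?case by simp
next
  case (Suc t)
  have ne: "permutations_of_set {..<n} \<noteq> {}" by simp
  show ?case using Suc by (simp add: set_pmf_of_set[OF ne])
qed

lemma EP_rr_Suc:
  fixes n :: nat
  defines "Ps \<equiv> permutations_of_set {..<n}"
  shows "EP (rr_iterate n \<eta> a b (Suc t) x0) h
     = EP (rr_iterate n \<eta> a b t x0) (\<lambda>y. (\<Sum>\<sigma>\<in>Ps. h (epoch \<eta> a b y \<sigma>)) / real (card Ps))"
proof -
  have ne: "Ps \<noteq> {}" "finite Ps" by (simp_all add: Ps_def)
  let ?M = "rr_iterate n \<eta> a b t x0"
  let ?f = "\<lambda>y. map_pmf (epoch \<eta> a b y) (pmf_of_set Ps)"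
  have finf: "finite (set_pmf (?f y))" for y using ne by simp
  have "EP (rr_iterate n \<eta> a b (Suc t) x0) h = measure_pmf.expectation (bind_pmf ?M ?f) h"
    using fin_rr[of n \<eta> a b "Suc t" x0] by (simp add: EP_expectation Ps_def)
  also have "\<dots> = (\<Sum>y\<in>set_pmf ?M. pmf ?M y *\<^sub>R measure_pmf.expectation (?f y) h)"
    by (rule pmf_expectation_bind[OF fin_rr]) (auto simp: set_pmf_of_set[OF ne(1,2)] ne(2))
  also have "\<dots> = EP ?M (\<lambda>y. (\<Sum>\<sigma>\<in>Ps. h (epoch \<eta> a b y \<sigma>)) / real (card Ps))"
    unfolding EP_def using ne by (intro sum.cong refl) (simp add: integral_pmf_of_set)
  finally show ?thesis .
qed

lemma EP_rr_0: "EP (rr_iterate n \<eta> a b 0 x0) h = h x0"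
  by (simp add: EP_def)

lemma EP_cong: "(\<And>x. x \<in> set_pmf M \<Longrightarrow> f x = g x) \<Longrightarrow> EP M f = EP M g"
  unfolding EP_def by (intro sum.cong refl) auto

lemma scalar_facts:
  fixes n k :: nat and a b :: "nat \<Rightarrow> real" and lam L G xs :: real
  assumes n2: "n \<ge> 2" and k1: "k \<ge> 1" and lam: "lam > 0" and L: "L > 0"
    and ab: "\<forall>i<n. 0 \<le> a i \<and> a i \<le> L"
    and F: "\<forall>x. Fobj n a b x = lam / 2 * x ^ 2 - ((\<Sum>i<n. b i) / real n) * x"
    and mn: "\<forall>y. Fobj n a b xs \<le> Fobj n a b y"
    and cond: "L / lam \<le> real k / (2 * ln (real (n * k)))"
  shows "(\<Sum>i<n. a i) = real n * lam" and "lam \<le> L" and "1 \<le> ln (real (n * k))"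
    and "lam * xs = (\<Sum>i<n. b i) / real n"
    and "L * ln (real (n * k)) \<le> lam * real k / 2"
proof -
  define B where "B = (\<Sum>i<n. b i) / real n"
  have n0: "real n > 0" using n2 by simp
  have "Fobj n a b 1 = ((\<Sum>i<n. a i) / 2 - (\<Sum>i<n. b i)) / real n"
    by (simp add: Fobj_def fcomp_def sum_subtractf sum_divide_distrib)
  then have "((\<Sum>i<n. a i) / 2 - (\<Sum>i<n. b i)) / real n = lam / 2 - (\<Sum>i<n. b i) / real n"
    using F by simp
  then show sa: "(\<Sum>i<n. a i) = real n * lam" using n0 by (simp add: field_simps)
  have "(\<Sum>i<n. a i) \<le> (\<Sum>i<n. L)" using ab by (intro sum_mono) auto
  then show lL: "lam \<le> L" using sa n0 by simp
  define l where "l = ln (real (n * k))"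
  have "(2::nat) \<le> n * k" using mult_le_mono[OF n2 k1] by simp
  then have nk: "real (n * k) \<ge> 2" by (metis of_nat_le_iff of_nat_numeral)
  have l0: "l > 0" using nk by (simp add: l_def)
  have c2: "L * l \<le> lam * real k / 2"
  proof -
    have "L \<le> lam * (real k / (2 * l))" using cond lam by (simp add: l_def pos_divide_le_eq mult.commute)
    then have "L * l \<le> lam * (real k / (2 * l)) * l" by (rule mult_right_mono) (use l0 in simp)
    also have "\<dots> = lam * real k / 2" using l0 by (simp add: field_simps)
    finally show ?thesis .
  qed
  then show "L * ln (real (n * k)) \<le> lam * real k / 2" by (simp add: l_def)
  show "1 \<le> ln (real (n * k))"
  proof (cases "k = 1")
    case True
    have "lam * l \<le> lam * real k / 2" using c2 lL l0 by (meson dual_order.trans mult_right_mono less_imp_le)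
    then have l2: "2 * l \<le> 1" using True lam by simp
    have "exp (2 * l) = (real n)\<^sup>2" using True n0
      by (simp add: l_def exp_of_nat_mult[of 2, simplified] )
    moreover have "exp (2 * l) \<le> exp 1" using l2 by simp
    moreover have "(real n)\<^sup>2 \<ge> 4"
    proof -
      have "(2::real) \<le> real n" using n2 by simp
      then have "(2::real)\<^sup>2 \<le> (real n)\<^sup>2" by (rule power_mono) simp
      then show ?thesis by simp
    qed
    ultimately show ?thesis using exp_le by linarith
  next
    case False
    then have "k \<ge> 2" using k1 by simp
    then have "(4::nat) \<le> n * k" using mult_le_mono[OF n2 \<open>k \<ge> 2\<close>] by simp
    then have "real (n * k) \<ge> 4" by (metis of_nat_le_iff of_nat_numeral)
    then have "exp 1 \<le> real (n * k)" using exp_le by linarith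
    moreover have "0 < real (n * k)" using \<open>real (n * k) \<ge> 4\<close> by linarith
    ultimately show ?thesis using ln_ge_iff[of "real (n * k)" 1] by blast
  qed
  have "Fobj n a b xs \<le> Fobj n a b (B / lam)" using mn by simp
  then have "lam / 2 * xs ^ 2 - B * xs \<le> lam / 2 * (B / lam) ^ 2 - B * (B / lam)"
    using F by (simp add: B_def)
  moreover have "lam / 2 * (xs - B / lam)\<^sup>2 = (lam / 2 * xs ^ 2 - B * xs) - (lam / 2 * (B / lam) ^ 2 - B * (B / lam))"
    using lam by (simp add: field_simps power2_eq_square)
  ultimately have "lam / 2 * (xs - B / lam)\<^sup>2 \<le> 0" by linarith
  then have "(xs - B / lam)\<^sup>2 \<le> 0" using lam by (simp add: mult_le_0_iff)
  then have "xs = B / lam" by simp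
  then show "lam * xs = (\<Sum>i<n. b i) / real n" using lam by (simp add: B_def)
qed

lemma sq_sum_le: "((x::real) + y)\<^sup>2 \<le> 2 * x\<^sup>2 + 2 * y\<^sup>2"
proof -
  have "0 \<le> (x - y)\<^sup>2" by simp
  moreover have "2 * x\<^sup>2 + 2 * y\<^sup>2 - (x + y)\<^sup>2 = (x - y)\<^sup>2" by (simp add: power2_eq_square algebra_simps)
  ultimately show ?thesis by linarith
qed

lemma main_bound:
  fixes n k :: nat and a b :: "nat \<Rightarrow> real" and lam L G x0 xs :: real
  assumes n2: "n \<ge> 2" and k1: "k \<ge> 1" and lam: "lam > 0" and L: "L > 0" and G: "G > 0"
    and ab: "\<forall>i<n. 0 \<le> a i \<and> a i \<le> L"
    and F: "\<forall>x. Fobj n a b x = lam / 2 * x ^ 2 - ((\<Sum>i<n. b i) / real n) * x"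
    and mn: "\<forall>y. Fobj n a b xs \<le> Fobj n a b y"
    and gb: "\<forall>i<n. \<bar>fcomp' a b i xs\<bar> \<le> G"
    and cond: "L / lam \<le> real k / (2 * ln (real (n * k)))"
  shows "measure_pmf.expectation
          (rr_iterate n (ln (real (n * k)) / (lam * real n * real k)) a b k x0)
          (\<lambda>x. Fobj n a b x - (INF y. Fobj n a b y))
        \<le> 3 * (ln (real (n * k))) ^ 6 *
          (lam / (real n ^ 2 * real k ^ 2) * (x0 - xs) ^ 2
           + G ^ 2 * L ^ 2 / lam ^ 3 * (1 / (real n ^ 2 * real k ^ 2) + 1 / (real n * real k ^ 3)))"
proof -
  note sf = scalar_facts[OF n2 k1 lam L ab F mn cond]
  define l where "l = ln (real (n * k))"
  define \<eta> where "\<eta> = l / (lam * real n * real k)"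
  define B where "B = (\<Sum>i<n. b i) / real n"
  define c where "c = (\<lambda>i. \<eta> * a i)"
  define g where "g = (\<lambda>i. a i * xs - b i)"
  define cm where "cm = \<eta> * L"
  define Ps where "Ps = permutations_of_set {..<n}"
  define N where "N = real (card Ps)"
  define P where "P = (\<Prod>i<n. 1 - c i)"
  define \<mu> where "\<mu> = (\<Sum>\<sigma>\<in>Ps. Zl c g \<sigma>) / N"
  define \<zeta> where "\<zeta> = (\<Sum>\<sigma>\<in>Ps. (Zl c g \<sigma>)\<^sup>2) / N"
  define p where "p = (\<lambda>t. rr_iterate n \<eta> a b t x0)"
  have n0: "real n > 0" using n2 by simp
  have k0: "real k > 0" using k1 by simp
  have l1: "1 \<le> l" using sf(3) by (simp add: l_def)
  have eta0: "0 \<le> \<eta>" using l1 lam n0 k0 by (simp add: \<eta>_def)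
  have N0: "N > 0" by (simp add: N_def Ps_def)
  have sa: "(\<Sum>i<n. a i) = real n * lam" by (rule sf(1))
  have cm_le: "cm \<le> 1 / (2 * real n)"
  proof -
    have "cm = (L * l) / (lam * real n * real k)" by (simp add: cm_def \<eta>_def)
    also have "\<dots> \<le> (lam * real k / 2) / (lam * real n * real k)"
      using sf(5) lam n0 k0 by (intro divide_right_mono) (simp_all add: l_def)
    also have "\<dots> = 1 / (2 * real n)" using lam k0 by (simp add: field_simps)
    finally show ?thesis .
  qed
  have cm1: "cm \<le> 1"
  proof -
    have "1 / (2 * real n) \<le> 1" using n0 n2 by simp
    then show ?thesis using cm_le by linarith
  qed
  have cb: "\<forall>i<n. 0 \<le> c i \<and> c i \<le> cm"
    using ab eta0 by (auto simp: c_def cm_def mult_left_mono)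
  have Ct: "(\<Sum>i<n. c i) = l / real k"
  proof -
    have "(\<Sum>i<n. c i) = \<eta> * (\<Sum>i<n. a i)" by (simp add: c_def sum_distrib_left)
    also have "\<dots> = l / real k" using sa lam n0 by (simp add: \<eta>_def)
    finally show ?thesis .
  qed
  have gs: "(\<Sum>i<n. g i) = 0"
  proof -
    have "(\<Sum>i<n. g i) = xs * (\<Sum>i<n. a i) - (\<Sum>i<n. b i)"
      by (simp add: g_def sum_subtractf sum_distrib_left mult.commute)
    also have "\<dots> = real n * (lam * xs) - (\<Sum>i<n. b i)" using sa by simp
    also have "\<dots> = 0" using sf(4) n0 by simp
    finally show ?thesis .
  qed
  have gb': "\<forall>i<n. \<bar>g i\<bar> \<le> G" using gb by (simp add: g_def fcomp'_def)
  have P01: "0 \<le> P" "P \<le> 1"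
    using cb cm1 by (auto simp: P_def intro!: prod_nonneg prod_le_1)
  have Pk: "P ^ k \<le> 1 / real (n * k)"
  proof -
    have fac: "0 \<le> 1 - c i \<and> 1 - c i \<le> exp (- c i)" if "i \<in> {..<n}" for i
    proof -
      have "c i \<le> 1" using cb cm1 that by force
      moreover have "1 + (- c i) \<le> exp (- c i)" by (rule exp_ge_add_one_self)
      ultimately show ?thesis by simp
    qed
    have "P \<le> (\<Prod>i<n. exp (- c i))"
      unfolding P_def by (rule prod_mono) (rule fac)
    also have "(\<Prod>i<n. exp (- c i)) = exp (\<Sum>i<n. - c i)" by (rule exp_sum[symmetric]) simp
    also have "(\<Sum>i<n. - c i) = - (l / real k)" by (simp only: sum_negf Ct)
    finally have Pe: "P \<le> exp (- (l / real k))" .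
    have "P ^ k \<le> exp (- (l / real k)) ^ k" by (rule power_mono[OF Pe P01(1)])
    also have "\<dots> = exp (real k * (- (l / real k)))" by (rule exp_of_nat_mult[symmetric])
    also have "real k * (- (l / real k)) = - l" using k0 by simp
    also have "exp (- l) = 1 / real (n * k)"
    proof -
      have "real (n * k) > 0" using n0 k0 by simp
      then have "exp l = real (n * k)" by (simp add: l_def)
      then show ?thesis by (simp add: exp_minus inverse_eq_divide)
    qed
    finally show ?thesis .
  qed
  have rep: "epoch \<eta> a b y \<sigma> - xs = P * (y - xs) - \<eta> * Zl c g \<sigma>" if s: "\<sigma> \<in> Ps" for y \<sigma>
  proof -
    have "epoch \<eta> a b y \<sigma> - xs = Pl c \<sigma> * (y - xs) - \<eta> * Zl c g \<sigma>"
      using epoch_repr[of g a xs b \<eta> y \<sigma>] by (simp add: g_def c_def)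
    moreover have "Pl c \<sigma> = P"
    proof -
      have st: "set \<sigma> = {..<n}" "distinct \<sigma>" using permutations_of_setD s by (auto simp: Ps_def)
      have "Pl c \<sigma> = prod (\<lambda>i. 1 - c i) (set \<sigma>)"
        unfolding Pl_def by (simp add: prod.distinct_set_conv_list[OF st(2)])
      then show ?thesis using st by (simp add: P_def)
    qed
    ultimately show ?thesis by simp
  qed
  note ps = perm_stats[OF n2 cb cm1 gb' G gs]
  have zeta: "\<zeta> \<le> real n ^ 3 * cm\<^sup>2 * G\<^sup>2" using ps(1) N0 by (simp add: \<zeta>_def N_def Ps_def field_simps)
  have zeta0: "0 \<le> \<zeta>" using N0 by (simp add: \<zeta>_def sum_nonneg)
  have mu: "\<bar>\<mu>\<bar> \<le> real n * cm * G + l / real k * (real n * cm * (sqrt (real n) * G))"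
  proof -
    have "\<bar>\<Sum>\<sigma>\<in>Ps. Zl c g \<sigma>\<bar> \<le> N * (real n * cm * G + l / real k * (real n * cm * (sqrt (real n) * G)))"
      using ps(2) by (simp only: N_def Ps_def Ct)
    then show ?thesis unfolding \<mu>_def using N0 by (simp add: abs_divide pos_divide_le_eq mult.commute)
  qed
  have fin: "finite (set_pmf (p t))" for t unfolding p_def by (rule fin_rr)
  have inner1: "(\<Sum>\<sigma>\<in>Ps. epoch \<eta> a b y \<sigma> - xs) / N = P * (y - xs) - \<eta> * \<mu>" for y
  proof -
    have "(\<Sum>\<sigma>\<in>Ps. epoch \<eta> a b y \<sigma> - xs) = (\<Sum>\<sigma>\<in>Ps. P * (y - xs) - \<eta> * Zl c g \<sigma>)"
      by (intro sum.cong refl) (simp add: rep)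
    also have "\<dots> = N * (P * (y - xs)) - \<eta> * (\<Sum>\<sigma>\<in>Ps. Zl c g \<sigma>)"
      by (simp add: sum_subtractf sum_distrib_left N_def)
    finally show ?thesis using N0 by (simp add: \<mu>_def field_simps)
  qed
  have inner2: "(\<Sum>\<sigma>\<in>Ps. (epoch \<eta> a b y \<sigma> - xs)\<^sup>2) / N
      = P\<^sup>2 * (y - xs)\<^sup>2 + (- 2 * P * \<eta> * \<mu>) * (y - xs) + \<eta>\<^sup>2 * \<zeta>" for y
  proof -
    have "(\<Sum>\<sigma>\<in>Ps. (epoch \<eta> a b y \<sigma> - xs)\<^sup>2)
        = (\<Sum>\<sigma>\<in>Ps. P\<^sup>2 * (y - xs)\<^sup>2 - (2 * P * \<eta> * (y - xs)) * Zl c g \<sigma> + \<eta>\<^sup>2 * (Zl c g \<sigma>)\<^sup>2)"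
      by (intro sum.cong refl) (simp add: rep power2_eq_square algebra_simps)
    also have "\<dots> = N * (P\<^sup>2 * (y - xs)\<^sup>2) - (2 * P * \<eta> * (y - xs)) * (\<Sum>\<sigma>\<in>Ps. Zl c g \<sigma>)
                    + \<eta>\<^sup>2 * (\<Sum>\<sigma>\<in>Ps. (Zl c g \<sigma>)\<^sup>2)"
      by (simp add: sum.distrib sum_subtractf sum_distrib_left N_def)
    finally show ?thesis using N0 by (simp add: \<mu>_def \<zeta>_def field_simps)
  qed
  define m where "m = (\<lambda>t. EP (p t) (\<lambda>x. x - xs))"
  define v where "v = (\<lambda>t. EP (p t) (\<lambda>x. (x - xs)\<^sup>2))"
  have mS: "m (Suc t) = P * m t - \<eta> * \<mu>" for t
  proof -
    have "m (Suc t) = EP (p t) (\<lambda>y. (\<Sum>\<sigma>\<in>Ps. epoch \<eta> a b y \<sigma> - xs) / N)"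
      unfolding m_def p_def N_def Ps_def by (rule EP_rr_Suc)
    also have "\<dots> = EP (p t) (\<lambda>y. P * (y - xs) + 0 * (y - xs) + (- (\<eta> * \<mu>)))"
      by (intro EP_cong) (simp add: inner1)
    also have "\<dots> = P * m t - \<eta> * \<mu>"
      using EP_lin[OF fin, where \<alpha> = P and f = "\<lambda>y. y - xs" and \<beta> = 0 and g = "\<lambda>y. y - xs" and \<gamma> = "- (\<eta> * \<mu>)"]
      by (simp add: m_def)
    finally show ?thesis .
  qed
  have vS: "v (Suc t) = P\<^sup>2 * v t + (- 2 * P * \<eta> * \<mu>) * m t + \<eta>\<^sup>2 * \<zeta>" for t
  proof -
    have "v (Suc t) = EP (p t) (\<lambda>y. (\<Sum>\<sigma>\<in>Ps. (epoch \<eta> a b y \<sigma> - xs)\<^sup>2) / N)"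
      unfolding v_def p_def N_def Ps_def by (rule EP_rr_Suc)
    also have "\<dots> = EP (p t) (\<lambda>y. P\<^sup>2 * (y - xs)\<^sup>2 + (- 2 * P * \<eta> * \<mu>) * (y - xs) + \<eta>\<^sup>2 * \<zeta>)"
      by (intro EP_cong) (simp add: inner2)
    also have "\<dots> = P\<^sup>2 * v t + (- 2 * P * \<eta> * \<mu>) * m t + \<eta>\<^sup>2 * \<zeta>"
      using EP_lin[OF fin, where \<alpha> = "P\<^sup>2" and f = "\<lambda>y. (y - xs)\<^sup>2" and \<beta> = "- 2 * P * \<eta> * \<mu>" and g = "\<lambda>y. y - xs" and \<gamma> = "\<eta>\<^sup>2 * \<zeta>"]
      by (simp add: m_def v_def)
    finally show ?thesis .
  qed
  have ind: "v t \<le> (m t)\<^sup>2 + real t * \<eta>\<^sup>2 * \<zeta> \<and> \<bar>m t\<bar> \<le> P ^ t * \<bar>x0 - xs\<bar> + real t * \<eta> * \<bar>\<mu>\<bar>" for t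
  proof (induction t)
    case 0
    then show ?case by (simp add: m_def v_def p_def EP_def)
  next
    case (Suc t)
    have IH1: "v t \<le> (m t)\<^sup>2 + real t * \<eta>\<^sup>2 * \<zeta>" and IH2: "\<bar>m t\<bar> \<le> P ^ t * \<bar>x0 - xs\<bar> + real t * \<eta> * \<bar>\<mu>\<bar>"
      using Suc by auto
    have P2: "0 \<le> P\<^sup>2" "P\<^sup>2 \<le> 1" using P01 by (auto simp: power_le_one)
    have t0: "0 \<le> real t * \<eta>\<^sup>2 * \<zeta>" using zeta0 by simp
    have A: "P\<^sup>2 * v t \<le> P\<^sup>2 * ((m t)\<^sup>2 + real t * \<eta>\<^sup>2 * \<zeta>)" by (rule mult_left_mono[OF IH1 P2(1)])
    have B: "P\<^sup>2 * (real t * \<eta>\<^sup>2 * \<zeta>) \<le> real t * \<eta>\<^sup>2 * \<zeta>" by (rule mult_left_le_one_le[OF t0 P2])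
    have C: "(m (Suc t))\<^sup>2 = P\<^sup>2 * (m t)\<^sup>2 + (- 2 * P * \<eta> * \<mu>) * m t + \<eta>\<^sup>2 * \<mu>\<^sup>2"
      by (simp add: mS power2_eq_square algebra_simps)
    have D: "0 \<le> \<eta>\<^sup>2 * \<mu>\<^sup>2" by simp
    have v1: "v (Suc t) \<le> (m (Suc t))\<^sup>2 + real (Suc t) * \<eta>\<^sup>2 * \<zeta>"
    proof -
      have E: "v (Suc t) = P\<^sup>2 * v t + (- 2 * P * \<eta> * \<mu>) * m t + \<eta>\<^sup>2 * \<zeta>" by (rule vS)
      have F: "real (Suc t) * \<eta>\<^sup>2 * \<zeta> = real t * \<eta>\<^sup>2 * \<zeta> + \<eta>\<^sup>2 * \<zeta>" by (simp add: algebra_simps)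
      have G: "P\<^sup>2 * ((m t)\<^sup>2 + real t * \<eta>\<^sup>2 * \<zeta>) = P\<^sup>2 * (m t)\<^sup>2 + P\<^sup>2 * (real t * \<eta>\<^sup>2 * \<zeta>)"
        by (simp add: algebra_simps)
      show ?thesis using A B C D E F G by linarith
    qed
    have "\<bar>m (Suc t)\<bar> \<le> \<bar>P * m t\<bar> + \<bar>\<eta> * \<mu>\<bar>" unfolding mS by (rule abs_triangle_ineq4)
    also have "\<bar>P * m t\<bar> = P * \<bar>m t\<bar>" using P01 by (simp add: abs_mult)
    also have "\<bar>\<eta> * \<mu>\<bar> = \<eta> * \<bar>\<mu>\<bar>" using eta0 by (simp add: abs_mult)
    also have "P * \<bar>m t\<bar> \<le> P * (P ^ t * \<bar>x0 - xs\<bar> + real t * \<eta> * \<bar>\<mu>\<bar>)"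
      by (rule mult_left_mono[OF IH2 P01(1)])
    also have "P * (P ^ t * \<bar>x0 - xs\<bar> + real t * \<eta> * \<bar>\<mu>\<bar>) \<le> P ^ Suc t * \<bar>x0 - xs\<bar> + real t * \<eta> * \<bar>\<mu>\<bar>"
    proof -
      have "P * (real t * \<eta> * \<bar>\<mu>\<bar>) \<le> real t * \<eta> * \<bar>\<mu>\<bar>"
        by (rule mult_left_le_one_le) (use eta0 P01 in auto)
      then show ?thesis by (simp add: algebra_simps)
    qed
    finally have m1: "\<bar>m (Suc t)\<bar> \<le> P ^ Suc t * \<bar>x0 - xs\<bar> + real (Suc t) * \<eta> * \<bar>\<mu>\<bar>"
      by (simp add: algebra_simps)
    show ?case using v1 m1 by simp
  qed
  have INF: "(INF y. Fobj n a b y) = Fobj n a b xs"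
    by (rule cInf_eq_minimum) (use mn in auto)
  have gap: "Fobj n a b x - (INF y. Fobj n a b y) = lam / 2 * (x - xs)\<^sup>2" for x
  proof -
    have Bx: "(\<Sum>i<n. b i) / real n = lam * xs" using sf(4) by simp
    have f1: "Fobj n a b x = lam / 2 * x ^ 2 - (lam * xs) * x" using F Bx by simp
    have f2: "Fobj n a b xs = lam / 2 * xs ^ 2 - (lam * xs) * xs" using F Bx by simp
    show ?thesis unfolding INF f1 f2 by (simp add: power2_eq_square algebra_simps)
  qed
  have E: "measure_pmf.expectation (p k) (\<lambda>x. Fobj n a b x - (INF y. Fobj n a b y)) = lam / 2 * v k"
  proof -
    have "measure_pmf.expectation (p k) (\<lambda>x. Fobj n a b x - (INF y. Fobj n a b y))
        = EP (p k) (\<lambda>x. Fobj n a b x - (INF y. Fobj n a b y))" by (rule EP_expectation[OF fin])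
    also have "\<dots> = EP (p k) (\<lambda>x. lam / 2 * (x - xs)\<^sup>2 + 0 * (x - xs) + 0)"
      by (intro EP_cong) (simp add: gap)
    also have "\<dots> = lam / 2 * v k"
      using EP_lin[OF fin, where \<alpha> = "lam / 2" and f = "\<lambda>y. (y - xs)\<^sup>2" and \<beta> = 0 and g = "\<lambda>y. y - xs" and \<gamma> = 0]
      by (simp add: v_def)
    finally show ?thesis .
  qed
  define Q where "Q = P ^ k"
  define y0 where "y0 = x0 - xs"
  have Q0: "0 \<le> Q" using P01 by (simp add: Q_def)
  have vk: "v k \<le> (m k)\<^sup>2 + real k * \<eta>\<^sup>2 * \<zeta>" and mk: "\<bar>m k\<bar> \<le> Q * \<bar>y0\<bar> + real k * \<eta> * \<bar>\<mu>\<bar>"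
    using ind[of k] by (auto simp: Q_def y0_def)
  have mk2: "(m k)\<^sup>2 \<le> 2 * (Q\<^sup>2 * y0\<^sup>2) + 2 * (real k ^ 2 * \<eta>\<^sup>2 * \<mu>\<^sup>2)"
  proof -
    have "\<bar>m k\<bar>\<^sup>2 \<le> (Q * \<bar>y0\<bar> + real k * \<eta> * \<bar>\<mu>\<bar>)\<^sup>2" by (rule power_mono[OF mk]) simp
    also have "\<dots> \<le> 2 * (Q * \<bar>y0\<bar>)\<^sup>2 + 2 * (real k * \<eta> * \<bar>\<mu>\<bar>)\<^sup>2"
      by (rule sq_sum_le)
    finally show ?thesis by (simp add: power_mult_distrib)
  qed
  have mu2: "\<mu>\<^sup>2 \<le> 2 * (real n ^ 2 * cm\<^sup>2 * G\<^sup>2) + 2 * ((l / real k)\<^sup>2 * real n ^ 3 * cm\<^sup>2 * G\<^sup>2)"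
  proof -
    have "\<bar>\<mu>\<bar>\<^sup>2 \<le> (real n * cm * G + l / real k * (real n * cm * (sqrt (real n) * G)))\<^sup>2"
      by (rule power_mono[OF mu]) simp
    also have "\<dots> \<le> 2 * (real n * cm * G)\<^sup>2 + 2 * (l / real k * (real n * cm * (sqrt (real n) * G)))\<^sup>2"
      by (rule sq_sum_le)
    also have "(l / real k * (real n * cm * (sqrt (real n) * G)))\<^sup>2 = (l / real k)\<^sup>2 * real n ^ 3 * cm\<^sup>2 * G\<^sup>2"
      using n0 by (simp add: power_mult_distrib power3_eq_cube power2_eq_square)
    finally show ?thesis by (simp add: power_mult_distrib)
  qed
  have Q2: "Q\<^sup>2 \<le> 1 / (real n ^ 2 * real k ^ 2)"
  proof -
    have "Q\<^sup>2 \<le> (1 / real (n * k))\<^sup>2" using Pk Q0 by (intro power_mono) (auto simp: Q_def)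
    then show ?thesis by (simp add: power_mult_distrib power_divide)
  qed
  define K where "K = G ^ 2 * L ^ 2 / lam ^ 3"
  define X1 where "X1 = lam / (real n ^ 2 * real k ^ 2) * y0 ^ 2"
  define X2 where "X2 = K * (1 / (real n ^ 2 * real k ^ 2))"
  define X3 where "X3 = K * (1 / (real n * real k ^ 3))"
  define X4 where "X4 = K * (1 / (real n * real k ^ 4))"
  have K0: "0 \<le> K" using lam by (simp add: K_def)
  have X0: "0 \<le> X1" "0 \<le> X2" "0 \<le> X3" using lam K0 by (simp_all add: X1_def X2_def X3_def)
  have X43: "X4 \<le> X3" unfolding X4_def X3_def
  proof (rule mult_left_mono[OF _ K0])
    have "real n * real k ^ 3 \<le> real n * real k ^ 4"
      using k1 n0 by (intro mult_left_mono power_increasing) auto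
    then show "1 / (real n * real k ^ 4) \<le> 1 / (real n * real k ^ 3)"
      using n0 k0 by (intro divide_left_mono) auto
  qed
  have T1: "lam * (Q\<^sup>2 * y0\<^sup>2) \<le> X1"
  proof -
    have "Q\<^sup>2 * y0\<^sup>2 \<le> 1 / (real n ^ 2 * real k ^ 2) * y0\<^sup>2" by (rule mult_right_mono[OF Q2]) simp
    then have "lam * (Q\<^sup>2 * y0\<^sup>2) \<le> lam * (1 / (real n ^ 2 * real k ^ 2) * y0\<^sup>2)"
      using lam by (intro mult_left_mono) auto
    then show ?thesis by (simp add: X1_def)
  qed
  have T2: "lam * (real k ^ 2 * \<eta>\<^sup>2 * \<mu>\<^sup>2) \<le> 2 * l ^ 4 * X2 + 2 * l ^ 6 * X4"
  proof -
    have "lam * (real k ^ 2 * \<eta>\<^sup>2 * \<mu>\<^sup>2) \<le> lam * (real k ^ 2 * \<eta>\<^sup>2 *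
          (2 * (real n ^ 2 * cm\<^sup>2 * G\<^sup>2) + 2 * ((l / real k)\<^sup>2 * real n ^ 3 * cm\<^sup>2 * G\<^sup>2)))"
      using mu2 lam by (intro mult_left_mono) auto
    also have "\<dots> = 2 * l ^ 4 * X2 + 2 * l ^ 6 * X4"
      using lam n0 k0 by (simp add: X2_def X4_def K_def cm_def \<eta>_def field_simps) algebra
    finally show ?thesis .
  qed
  have T3: "lam / 2 * (real k * \<eta>\<^sup>2 * \<zeta>) \<le> l ^ 4 * X3 / 2"
  proof -
    have "lam / 2 * (real k * \<eta>\<^sup>2 * \<zeta>) \<le> lam / 2 * (real k * \<eta>\<^sup>2 * (real n ^ 3 * cm\<^sup>2 * G\<^sup>2))"
      using zeta lam k0 by (intro mult_left_mono) auto
    also have "\<dots> = l ^ 4 * X3 / 2"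
      using lam n0 k0 by (simp add: X3_def K_def cm_def \<eta>_def field_simps) (intro disjI2, algebra)
    finally show ?thesis .
  qed
  have l46: "l ^ 4 \<le> l ^ 6" "1 \<le> l ^ 6" using l1 by (auto intro: power_increasing one_le_power)
  have c1: "X1 \<le> l ^ 6 * X1" using mult_right_mono[OF l46(2) X0(1)] by simp
  have c2: "l ^ 4 * X2 \<le> l ^ 6 * X2" using mult_right_mono[OF l46(1) X0(2)] .
  have c3: "l ^ 4 * X3 \<le> l ^ 6 * X3" using mult_right_mono[OF l46(1) X0(3)] .
  have c4: "l ^ 6 * X4 \<le> l ^ 6 * X3" using mult_left_mono[OF X43] l1 by simp
  have "lam / 2 * v k \<le> lam / 2 * (2 * (Q\<^sup>2 * y0\<^sup>2) + 2 * (real k ^ 2 * \<eta>\<^sup>2 * \<mu>\<^sup>2) + real k * \<eta>\<^sup>2 * \<zeta>)"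
    using vk mk2 lam by (intro mult_left_mono) auto
  also have "\<dots> = lam * (Q\<^sup>2 * y0\<^sup>2) + lam * (real k ^ 2 * \<eta>\<^sup>2 * \<mu>\<^sup>2) + lam / 2 * (real k * \<eta>\<^sup>2 * \<zeta>)"
    by (simp add: algebra_simps)
  also have "\<dots> \<le> 3 * l ^ 6 * (X1 + (X2 + X3))"
  proof -
    have nn: "0 \<le> l ^ 6 * X1" "0 \<le> l ^ 6 * X2" "0 \<le> l ^ 6 * X3" using X0 l46 by simp_all
    have r: "3 * l ^ 6 * (X1 + (X2 + X3)) = 3 * (l ^ 6 * X1) + 3 * (l ^ 6 * X2) + 3 * (l ^ 6 * X3)"
      by (simp add: algebra_simps)
    show ?thesis unfolding r using T1 T2 T3 c1 c2 c3 c4 nn by linarith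
  qed
  finally have fin_b: "lam / 2 * v k \<le> 3 * l ^ 6 * (X1 + (X2 + X3))" .
  have rhs: "3 * l ^ 6 * (X1 + (X2 + X3)) = 3 * (ln (real (n * k))) ^ 6 *
          (lam / (real n ^ 2 * real k ^ 2) * (x0 - xs) ^ 2
           + G ^ 2 * L ^ 2 / lam ^ 3 * (1 / (real n ^ 2 * real k ^ 2) + 1 / (real n * real k ^ 3)))"
    unfolding l_def X1_def X2_def X3_def K_def y0_def by (simp add: algebra_simps)
  have E': "measure_pmf.expectation
          (rr_iterate n (ln (real (n * k)) / (lam * real n * real k)) a b k x0)
          (\<lambda>x. Fobj n a b x - (INF y. Fobj n a b y)) = lam / 2 * v k"
    using E unfolding p_def \<eta>_def l_def .
  show ?thesis unfolding E' using fin_b rhs by (rule ord_le_eq_trans)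
qed

theorem theorem5:
  shows "\<exists>C::real. \<exists>p::nat. C > 0 \<and>
    (\<forall>(n::nat) (k::nat) (a::nat \<Rightarrow> real) (b::nat \<Rightarrow> real) (lam::real) (L::real) (G::real)
        (x0::real) (xs::real).
      n \<ge> 2 \<longrightarrow> k \<ge> 1 \<longrightarrow> lam > 0 \<longrightarrow> L > 0 \<longrightarrow> G > 0 \<longrightarrow>
      (\<forall>i<n. 0 \<le> a i \<and> a i \<le> L) \<longrightarrow>
      (\<forall>x. Fobj n a b x = lam / 2 * x ^ 2 - ((\<Sum>i<n. b i) / real n) * x) \<longrightarrow>
      (\<forall>y. Fobj n a b xs \<le> Fobj n a b y) \<longrightarrow>
      (\<forall>i<n. \<bar>fcomp' a b i xs\<bar> \<le> G) \<longrightarrow>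
      L / lam \<le> real k / (2 * ln (real (n * k))) \<longrightarrow>
      measure_pmf.expectation
          (rr_iterate n (ln (real (n * k)) / (lam * real n * real k)) a b k x0)
          (\<lambda>x. Fobj n a b x - (INF y. Fobj n a b y))
        \<le> C * (ln (real (n * k))) ^ p *
          (lam / (real n ^ 2 * real k ^ 2) * (x0 - xs) ^ 2
           + G ^ 2 * L ^ 2 / lam ^ 3 * (1 / (real n ^ 2 * real k ^ 2) + 1 / (real n * real k ^ 3))))"
proof (intro exI conjI allI impI)
  show "(3::real) > 0" by simp
next
  fix n k :: nat and a b :: "nat \<Rightarrow> real" and lam L G x0 xs :: real
  assume h: "n \<ge> 2" "k \<ge> 1" "lam > 0" "L > 0" "G > 0"
    "\<forall>i<n. 0 \<le> a i \<and> a i \<le> L"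
    "\<forall>x. Fobj n a b x = lam / 2 * x ^ 2 - ((\<Sum>i<n. b i) / real n) * x"
    "\<forall>y. Fobj n a b xs \<le> Fobj n a b y"
    "\<forall>i<n. \<bar>fcomp' a b i xs\<bar> \<le> G"
    "L / lam \<le> real k / (2 * ln (real (n * k)))"
  show "measure_pmf.expectation
          (rr_iterate n (ln (real (n * k)) / (lam * real n * real k)) a b k x0)
          (\<lambda>x. Fobj n a b x - (INF y. Fobj n a b y))
        \<le> 3 * (ln (real (n * k))) ^ 6 *
          (lam / (real n ^ 2 * real k ^ 2) * (x0 - xs) ^ 2
           + G ^ 2 * L ^ 2 / lam ^ 3 * (1 / (real n ^ 2 * real k ^ 2) + 1 / (real n * real k ^ 3)))"
    by (rule main_bound[OF h])
qed

end
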